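(* Let $n\ge0$. For all $x,y\in Q_n$ we have $L_{x,y}=R_{x,y}$ as permutations of $Q_n$.
   Context: Cayley--Dickson loops: $Q_0=\{1,-1\}\subset\mathbb{R}$ with conjugation $x^*=x$. For $n\ge1$, $Q_n=\{(x,0),(x,1)\mid x\in Q_{n-1}\}$ with multiplication $(x,0)(y,0)=(xy,0)$, $(x,0)(y,1)=(yx,1)$, $(x,1)(y,0)=(xy^*,1)$, $(x,1)(y,1)=(-y^*x,0)$ and conjugation $(x,0)^*=(x^*,0)$, $(x,1)^*=(-x,1)$, where $-(x,a)=(-x,a)$. $Q_n$ is a loop with neutral element $1=(1,0,\dots,0)$. Translations $L_x(a)=xa$, $R_x(a)=ax$; $L_{x,y}=L_{yx}^{-1}L_yL_x$ and $R_{x,y}=R_{xy}^{-1}R_yR_x$. *)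

theory Defs
  imports Main
begin

(* An element of Q_n is encoded as (s, bs) with s :: bool the sign of the
   underlying element of Q_0 = {1,-1} (s = True means -1) and bs a list of
   n bits; the Cayley--Dickson pair (x, a) with x = (s, bs) is encoded as
   (s, a # bs), i.e. the most recently adjoined bit is the head of the list. *)

type_synonym cd = "bool \<times> bool list"

definition Q :: "nat \<Rightarrow> cd set" where
  "Q n = {x. length (snd x) = n}"

definition cd_one :: "nat \<Rightarrow> cd" where
  "cd_one n = (False, replicate n False)"

definition cd_push :: "bool \<Rightarrow> cd \<Rightarrow> cd" where
  "cd_push a x = (fst x, a # snd x)"

definition cd_neg :: "cd \<Rightarrow> cd" where
  "cd_neg x = (\<not> fst x, snd x)"

fun cd_conj :: "cd \<Rightarrow> cd" where
  "cd_conj (s, []) = (s, [])"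
| "cd_conj (s, False # xs) = cd_push False (cd_conj (s, xs))"
| "cd_conj (s, True # xs) = cd_neg (s, True # xs)"

lemma length_cd_conj [simp]: "length (snd (cd_conj x)) = length (snd x)"
  by (induction x rule: cd_conj.induct) (auto simp: cd_push_def cd_neg_def)

function cd_mult :: "cd \<Rightarrow> cd \<Rightarrow> cd" where
  "cd_mult (s, []) (t, []) = (s \<noteq> t, [])"
| "cd_mult (s, False # xs) (t, False # ys) = cd_push False (cd_mult (s, xs) (t, ys))"
| "cd_mult (s, False # xs) (t, True # ys) = cd_push True (cd_mult (t, ys) (s, xs))"
| "cd_mult (s, True # xs) (t, False # ys) = cd_push True (cd_mult (s, xs) (cd_conj (t, ys)))"
| "cd_mult (s, True # xs) (t, True # ys) = cd_push False (cd_neg (cd_mult (cd_conj (t, ys)) (s, xs)))"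
| "cd_mult (s, []) (t, b # ys) = undefined"
| "cd_mult (s, a # xs) (t, []) = undefined"
  by pat_completeness auto
termination
  by (relation "measure (\<lambda>(x, y). length (snd x) + length (snd y))")
     (auto simp del: length_cd_conj simp: length_cd_conj[of "(_, _)", simplified])

definition Ltr :: "cd \<Rightarrow> cd \<Rightarrow> cd" where "Ltr x a = cd_mult x a"
definition Rtr :: "cd \<Rightarrow> cd \<Rightarrow> cd" where "Rtr x a = cd_mult a x"

definition Lxy :: "nat \<Rightarrow> cd \<Rightarrow> cd \<Rightarrow> cd \<Rightarrow> cd" where
  "Lxy n x y = the_inv_into (Q n) (Ltr (cd_mult y x)) \<circ> Ltr y \<circ> Ltr x"

definition Rxy :: "nat \<Rightarrow> cd \<Rightarrow> cd \<Rightarrow> cd \<Rightarrow> cd" where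
  "Rxy n x y = the_inv_into (Q n) (Rtr (cd_mult x y)) \<circ> Rtr y \<circ> Rtr x"

end

theory Submission imports Defs begin

fun cz :: "bool list \<Rightarrow> bool" where
  "cz [] = False" | "cz (b # bs) = (b \<or> cz bs)"

function sg :: "bool list \<Rightarrow> bool list \<Rightarrow> bool" where
  "sg [] v = False"
| "sg (a # u) [] = False"
| "sg (False # u) (False # v) = sg u v"
| "sg (False # u) (True # v) = sg v u"
| "sg (True # u) (False # v) = (sg u v \<noteq> cz v)"
| "sg (True # u) (True # v) = (cz v = sg v u)"
  by pat_completeness auto
termination
  by (relation "measure (\<lambda>(u, v). length u + length v)") auto

definition xr :: "bool list \<Rightarrow> bool list \<Rightarrow> bool list" where
  "xr u v = map2 (\<noteq>) u v"

lemma xr_simps[simp]: "xr [] v = []" "xr u [] = []" "xr (a # u) (b # v) = (a \<noteq> b) # xr u v"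
  by (auto simp: xr_def)

lemma xr_comm: "xr u v = xr v u"
proof (induction u arbitrary: v)
  case Nil show ?case by (cases v) auto
next
  case (Cons a u) then show ?case by (cases v) auto
qed

lemma length_xr[simp]: "length (xr u v) = min (length u) (length v)"
  by (simp add: xr_def)

lemma xr_assoc: "xr (xr u v) w = xr u (xr v w)"
proof (induction u arbitrary: v w)
  case Nil show ?case by simp
next
  case (Cons a u) then show ?case by (cases v; cases w) auto
qed

lemma cz_xr: "length u = length v \<Longrightarrow> cz (xr u v) \<longleftrightarrow> u \<noteq> v"
proof (induction u arbitrary: v)
  case Nil then show ?case by simp
next
  case (Cons a u) then show ?case by (cases v) auto
qed

lemma xr_nz: "length u = length v \<Longrightarrow> \<not> cz u \<Longrightarrow> xr u v = v"
proof (induction u arbitrary: v)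
  case Nil then show ?case by simp
next
  case (Cons a u) then show ?case by (cases v) auto
qed

lemma cz_rep: "\<not> cz u \<longleftrightarrow> u = replicate (length u) False"
  by (induction u) auto

lemma cz_eq: "\<not> cz u \<Longrightarrow> length u = length v \<Longrightarrow> (u = v \<longleftrightarrow> \<not> cz v)"
  by (metis cz_rep)

lemma comm: "length u = length v \<Longrightarrow> (sg u v \<noteq> sg v u) \<longleftrightarrow> cz u \<and> cz v \<and> u \<noteq> v"
proof (induction "length u" arbitrary: u v rule: less_induct)
  case less
  show ?case
  proof (cases u)
    case Nil then show ?thesis using less by auto
  next
    case (Cons a u')
    then obtain b v' where v: "v = b # v'" using less by (cases v) auto
    have l: "length u' = length v'" using less Cons v by auto
    have IH1: "(sg u' v' \<noteq> sg v' u') \<longleftrightarrow> cz u' \<and> cz v' \<and> u' \<noteq> v'"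
      using less(1)[of u' v'] l Cons by auto
    show ?thesis unfolding Cons v using IH1 cz_eq[OF _ l] cz_eq[OF _ l[symmetric]]
      by (cases a; cases b) auto
  qed
qed

lemma conj_eq: "cd_conj (s, u) = (s \<noteq> cz u, u)"
  by (induction "(s,u)" arbitrary: s u rule: cd_conj.induct) (auto simp: cd_push_def cd_neg_def)

lemma mult_eq: "length u = n \<Longrightarrow> length v = n \<Longrightarrow> cd_mult (s, u) (t, v) = ((s \<noteq> t) \<noteq> sg u v, xr u v)"
proof (induction n arbitrary: u v s t)
  case 0 then show ?case by auto
next
  case (Suc n)
  then obtain a u' b v' where u: "u = a # u'" and v: "v = b # v'" and l: "length u' = n" "length v' = n"
    by (metis length_Suc_conv)
  show ?case using Suc.IH[OF l] Suc.IH[OF l(2) l(1)] unfolding u v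
    by (cases a; cases b) (auto simp: cd_push_def cd_neg_def conj_eq xr_comm[of v' u'])
qed

lemma xr_left_comm: "xr u (xr v w) = xr v (xr u w)"
  by (metis xr_assoc xr_comm)

lemma Kx: "length x = length y \<Longrightarrow> (sg x y \<noteq> sg y x) = ((cz x \<noteq> cz y) \<noteq> cz (xr x y))"
proof -
  assume l: "length x = length y"
  show ?thesis
  proof (cases "cz x")
    case True
    show ?thesis
    proof (cases "cz y")
      case True
      then show ?thesis using `cz x` comm[OF l] cz_xr[OF l] by simp
    next
      case False
      then have "(x = y) = (\<not> cz x)" using cz_eq[of y x] l by auto
      then show ?thesis using False comm[OF l] cz_xr[OF l] by simp
    qed
  next
    case False
    then have "(x = y) = (\<not> cz y)" using cz_eq[of x y] l by simp
    then show ?thesis using False comm[OF l] cz_xr[OF l] by simp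
  qed
qed

definition F where "F a b c = (((sg a b \<noteq> sg (xr a b) c) \<noteq> sg b c) \<noteq> sg a (xr b c))"

lemma flex: "length a = n \<Longrightarrow> length b = n \<Longrightarrow> length c = n \<Longrightarrow> F a b c = F c b a"
proof (induction n arbitrary: a b c)
  case 0 then show ?case by (auto simp: F_def)
next
  case (Suc n)
  obtain p a' where ua: "a = p # a'" "length a' = n" using Suc.prems(1) by (cases a) auto
  obtain q b' where ub: "b = q # b'" "length b' = n" using Suc.prems(2) by (cases b) auto
  obtain r c' where uc: "c = r # c'" "length c' = n" using Suc.prems(3) by (cases c) auto
  note u = ua(1) ub(1) uc(1) and l = ua(2) ub(2) uc(2)
  have IH: "F a' b' c' = F c' b' a'" using Suc.IH l by blast
  have C: "\<And>u v. length u = n \<Longrightarrow> length v = n \<Longrightarrow> (sg u v \<noteq> sg v u) = ((cz u \<noteq> cz v) \<noteq> cz (xr u v))"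
    using Kx by auto
  note I = IH C[of a' b'] C[of b' c'] C[of "xr a' b'" c'] C[of a' "xr b' c'"] C[of a' c']
  show ?case unfolding u using I l
    apply (cases p; cases q; cases r)
           apply (simp_all add: F_def xr_assoc xr_comm xr_left_comm)
           apply argo+
    done
qed

lemma xr_cancel: "length u = length w \<Longrightarrow> xr u (xr u w) = w"
proof (induction u arbitrary: w)
  case Nil then show ?case by simp
next
  case (Cons a u) then show ?case by (cases w) auto
qed

lemma inj_L: "z \<in> Q n \<Longrightarrow> inj_on (Ltr z) (Q n)"
proof (rule inj_onI)
  fix a1 a2 assume z: "z \<in> Q n" and a: "a1 \<in> Q n" "a2 \<in> Q n" and e: "Ltr z a1 = Ltr z a2"
  obtain s u where zz: "z = (s, u)" by fastforce
  obtain s1 u1 where a1: "a1 = (s1, u1)" by fastforce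
  obtain s2 u2 where a2: "a2 = (s2, u2)" by fastforce
  have l: "length u = n" "length u1 = n" "length u2 = n" using z a zz a1 a2 by (auto simp: Q_def)
  have "xr u u1 = xr u u2" and "(s \<noteq> s1) \<noteq> sg u u1 = ((s \<noteq> s2) \<noteq> sg u u2)"
    using e l unfolding Ltr_def zz a1 a2 by (auto simp: mult_eq)
  moreover from this(1) have "u1 = u2" using xr_cancel l by metis
  ultimately show "a1 = a2" unfolding a1 a2 by auto
qed

lemma inj_R: "z \<in> Q n \<Longrightarrow> inj_on (Rtr z) (Q n)"
proof (rule inj_onI)
  fix a1 a2 assume z: "z \<in> Q n" and a: "a1 \<in> Q n" "a2 \<in> Q n" and e: "Rtr z a1 = Rtr z a2"
  obtain s u where zz: "z = (s, u)" by fastforce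
  obtain s1 u1 where a1: "a1 = (s1, u1)" by fastforce
  obtain s2 u2 where a2: "a2 = (s2, u2)" by fastforce
  have l: "length u = n" "length u1 = n" "length u2 = n" using z a zz a1 a2 by (auto simp: Q_def)
  have "xr u u1 = xr u u2" and "(s1 \<noteq> s) \<noteq> sg u1 u = ((s2 \<noteq> s) \<noteq> sg u2 u)"
    using e l unfolding Rtr_def zz a1 a2 by (auto simp: mult_eq xr_comm)
  moreover from this(1) have "u1 = u2" using xr_cancel l by metis
  ultimately show "a1 = a2" unfolding a1 a2 by auto
qed

theorem mainTheorem4:
  fixes n :: nat and x y :: cd
  assumes "x \<in> Q n" and "y \<in> Q n"
  shows "\<forall>a \<in> Q n. Lxy n x y a = Rxy n x y a"
proof
  fix a assume aQ: "a \<in> Q n"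
  obtain s u where x: "x = (s, u)" by fastforce
  obtain t v where y: "y = (t, v)" by fastforce
  obtain r w where a: "a = (r, w)" by fastforce
  have l: "length u = n" "length v = n" "length w = n" using assms aQ x y a by (auto simp: Q_def)
  define a' where "a' = (r \<noteq> F v u w, w)"
  have a'Q: "a' \<in> Q n" using l by (simp add: a'_def Q_def)
  have yxQ: "cd_mult y x \<in> Q n" and xyQ: "cd_mult x y \<in> Q n" using l by (simp_all add: x y mult_eq Q_def)
  have fl: "F v u w = F w u v" using flex l by blast
  have eL: "Ltr (cd_mult y x) a' = (Ltr y \<circ> Ltr x) a"
    using l unfolding x y a a'_def Ltr_def by (simp add: mult_eq F_def xr_assoc) argo
  have eR: "Rtr (cd_mult x y) a' = (Rtr y \<circ> Rtr x) a"
    using l fl unfolding x y a a'_def Rtr_def by (simp add: mult_eq F_def xr_assoc) argo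
  have "Lxy n x y a = a'" unfolding Lxy_def comp_apply
    using the_inv_into_f_eq[OF inj_L[OF yxQ] _ a'Q] eL by simp
  moreover have "Rxy n x y a = a'" unfolding Rxy_def comp_apply
    using the_inv_into_f_eq[OF inj_R[OF xyQ] _ a'Q] eR by simp
  ultimately show "Lxy n x y a = Rxy n x y a" by simp
qed

end
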